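(* Let $X$ be a complementably homogeneous Banach space. Then $\mathscr{S}_X(X)$ is the unique maximal two-sided ideal of $\mathscr{B}(X)$ if and only if $\mathscr{S}_X(X)$ is closed under addition.
   Context: An infinite-dimensional Banach space $X$ is complementably homogeneous if for every closed subspace $Y\subseteq X$ isomorphic to $X$ there is a complemented subspace $W\subseteq Y$ of $X$ isomorphic to $X$. $\mathscr{S}_X(X)$ is the set of $T\in\mathscr{B}(X)$ such that there is no closed subspace $W\subseteq X$ isomorphic to $X$ with $T|_W$ bounded below. *)

theory Defs
  imports "HOL-Analysis.Analysis"
begin

definition infinite_dimensional :: "'a::real_normed_vector itself \<Rightarrow> bool" where
  "infinite_dimensional _ \<longleftrightarrow> \<not> (\<exists>S::'a set. finite S \<and> span S = UNIV)"

definition bounded_below_on :: "('a::real_normed_vector \<Rightarrow>\<^sub>L 'b::real_normed_vector) \<Rightarrow> 'a set \<Rightarrow> bool" where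
  "bounded_below_on T W \<longleftrightarrow> (\<exists>c>0. \<forall>x\<in>W. c * norm x \<le> norm (T x))"

text \<open>A closed subspace Y of X is isomorphic to X iff there is a bounded operator on X
  that is bounded below (hence an isomorphism onto its range) with range Y.\<close>
definition iso_to_space :: "'a::banach set \<Rightarrow> bool" where
  "iso_to_space Y \<longleftrightarrow> (\<exists>T::'a \<Rightarrow>\<^sub>L 'a. range (blinfun_apply T) = Y \<and> bounded_below_on T UNIV)"

definition closed_subspace :: "'a::real_normed_vector set \<Rightarrow> bool" where
  "closed_subspace Y \<longleftrightarrow> subspace Y \<and> closed Y"

definition complemented :: "'a::banach set \<Rightarrow> bool" where
  "complemented W \<longleftrightarrow> closed_subspace W \<and>
     (\<exists>P::'a \<Rightarrow>\<^sub>L 'a. P o\<^sub>L P = P \<and> range (blinfun_apply P) = W)"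

definition complementably_homogeneous :: "'a::banach itself \<Rightarrow> bool" where
  "complementably_homogeneous TYPE('a) \<longleftrightarrow> infinite_dimensional TYPE('a) \<and>
     (\<forall>Y::'a set. closed_subspace Y \<and> iso_to_space Y \<longrightarrow>
        (\<exists>W. W \<subseteq> Y \<and> complemented W \<and> iso_to_space W))"

definition SX :: "('a::banach \<Rightarrow>\<^sub>L 'a) set" where
  "SX = {T. \<not> (\<exists>W. closed_subspace W \<and> iso_to_space W \<and> bounded_below_on T W)}"

definition two_sided_ideal :: "('a::banach \<Rightarrow>\<^sub>L 'a) set \<Rightarrow> bool" where
  "two_sided_ideal I \<longleftrightarrow> 0 \<in> I \<and> (\<forall>a\<in>I. \<forall>b\<in>I. a + b \<in> I) \<and> (\<forall>a\<in>I. - a \<in> I) \<and>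
     (\<forall>a\<in>I. \<forall>b. b o\<^sub>L a \<in> I \<and> a o\<^sub>L b \<in> I)"

definition maximal_ideal :: "('a::banach \<Rightarrow>\<^sub>L 'a) set \<Rightarrow> bool" where
  "maximal_ideal I \<longleftrightarrow> two_sided_ideal I \<and> I \<noteq> UNIV \<and>
     (\<forall>J. two_sided_ideal J \<and> J \<noteq> UNIV \<and> I \<subseteq> J \<longrightarrow> J = I)"

end

theory Submission
  imports Defs
begin

lemma bb_UNIV_closed_range:
  fixes U :: "'a::banach \<Rightarrow>\<^sub>L 'a"
  assumes "bounded_below_on U UNIV"
  shows "closed_subspace (range (blinfun_apply U))"
proof -
  obtain c where c: "c > 0" "\<forall>x. c * norm x \<le> norm (U x)"
    using assms unfolding bounded_below_on_def by auto
  have "complete (blinfun_apply U ` UNIV)"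
    by (rule complete_isometric_image[OF c(1) subspace_UNIV blinfun.bounded_linear_right])
       (use c complete_UNIV in auto)
  then have "closed (range (blinfun_apply U))" by (rule complete_imp_closed)
  moreover have "subspace (range (blinfun_apply U))"
    by (rule linear_subspace_image[OF bounded_linear.linear[OF blinfun.bounded_linear_right] subspace_UNIV])
  ultimately show ?thesis unfolding closed_subspace_def by auto
qed

lemma iso_closed: "iso_to_space (Y::'a::banach set) \<Longrightarrow> closed_subspace Y"
  unfolding iso_to_space_def using bb_UNIV_closed_range by blast

lemma iso_image:
  fixes b :: "'a::banach \<Rightarrow>\<^sub>L 'a"
  assumes "iso_to_space W" "bounded_below_on b W"
  shows "iso_to_space (blinfun_apply b ` W)"
proof -
  obtain U :: "'a \<Rightarrow>\<^sub>L 'a" where U: "range (blinfun_apply U) = W" "bounded_below_on U UNIV"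
    using assms(1) unfolding iso_to_space_def by blast
  obtain c where c: "c > 0" "\<forall>x\<in>W. c * norm x \<le> norm (b x)"
    using assms(2) unfolding bounded_below_on_def by auto
  obtain d where d: "d > 0" "\<forall>x. d * norm x \<le> norm (U x)"
    using U(2) unfolding bounded_below_on_def by auto
  have "range (blinfun_apply (b o\<^sub>L U)) = blinfun_apply b ` W"
    using U(1) by auto
  moreover have "bounded_below_on (b o\<^sub>L U) UNIV"
    unfolding bounded_below_on_def
  proof (intro exI[of _ "c*d"] conjI ballI)
    show "0 < c * d" using c d by simp
    fix x :: 'a
    have "U x \<in> W" using U(1) by auto
    then have "c * norm (U x) \<le> norm (b (U x))" using c by auto
    moreover have "c * (d * norm x) \<le> c * norm (U x)"
      using d c by (intro mult_left_mono) auto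
    ultimately show "c * d * norm x \<le> norm ((b o\<^sub>L U) x)" by simp
  qed
  ultimately show ?thesis unfolding iso_to_space_def by blast
qed

lemma iso_nonzero:
  assumes inf: "infinite_dimensional TYPE('a::banach)" and "iso_to_space (W::'a set)"
  shows "\<exists>w\<in>W. w \<noteq> 0"
proof -
  obtain U :: "'a \<Rightarrow>\<^sub>L 'a" where U: "range (blinfun_apply U) = W" "bounded_below_on U UNIV"
    using assms(2) unfolding iso_to_space_def by blast
  obtain d where d: "d > 0" "\<forall>x. d * norm x \<le> norm (U x)"
    using U(2) unfolding bounded_below_on_def by auto
  have "span ({}::'a set) \<noteq> UNIV" using inf unfolding infinite_dimensional_def by blast
  then obtain x :: 'a where "x \<noteq> 0" by auto
  then have "U x \<noteq> 0" using d(1) spec[OF d(2), of x] by (auto simp: mult_le_0_iff)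
  then show ?thesis using U(1) by auto
qed

lemma inv_blinfun:
  fixes T R :: "'a::banach \<Rightarrow>\<^sub>L 'a"
  assumes V: "subspace V" and bb: "bounded_below_on T V"
    and R: "range (blinfun_apply R) \<subseteq> blinfun_apply T ` V"
  shows "\<exists>B::'a \<Rightarrow>\<^sub>L 'a. \<forall>x. B x \<in> V \<and> T (B x) = R x"
proof -
  obtain c where c: "c > 0" "\<forall>x\<in>V. c * norm x \<le> norm (T x)"
    using bb unfolding bounded_below_on_def by auto
  have inj: "u = v" if "u \<in> V" "v \<in> V" "T u = T v" for u v
  proof -
    have "u - v \<in> V" using V that by (simp add: subspace_diff)
    then have "c * norm (u - v) \<le> norm (T (u - v))" using c by auto
    also have "T (u - v) = 0" using that by (simp add: blinfun.diff_right)
    finally have "c * norm (u - v) \<le> 0" by simp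
    then have "norm (u - v) \<le> 0" using c by (simp add: mult_le_0_iff)
    then show ?thesis by simp
  qed
  define f where "f x = inv_into V (blinfun_apply T) (R x)" for x
  have f: "f x \<in> V \<and> T (f x) = R x" for x
  proof -
    have "R x \<in> blinfun_apply T ` V" using R by auto
    then show ?thesis unfolding f_def by (auto intro: inv_into_into f_inv_into_f)
  qed
  have add: "f (x + y) = f x + f y" for x y
  proof (rule inj)
    show "f (x + y) \<in> V" using f by blast
    show "f x + f y \<in> V" using f V by (blast intro: subspace_add)
    have "T (f x + f y) = T (f x) + T (f y)" by (rule blinfun.add_right)
    also have "\<dots> = R x + R y" using f by simp
    also have "\<dots> = R (x + y)" by (simp add: blinfun.add_right)
    finally show "T (f (x + y)) = T (f x + f y)" using f by simp
  qed
  have scl: "f (r *\<^sub>R x) = r *\<^sub>R f x" for r x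
  proof (rule inj)
    show "f (r *\<^sub>R x) \<in> V" using f by blast
    show "r *\<^sub>R f x \<in> V" using f V by (blast intro: subspace_scale)
    have "T (r *\<^sub>R f x) = r *\<^sub>R T (f x)" by (rule blinfun.scaleR_right)
    also have "\<dots> = R (r *\<^sub>R x)" using f by (simp add: blinfun.scaleR_right)
    finally show "T (f (r *\<^sub>R x)) = T (r *\<^sub>R f x)" using f by simp
  qed
  have "bounded_linear f"
  proof (rule bounded_linear_intro[where K = "norm R / c"])
    show "f (x + y) = f x + f y" for x y by (rule add)
    show "f (r *\<^sub>R x) = r *\<^sub>R f x" for r x by (rule scl)
    fix x
    have "c * norm (f x) \<le> norm (R x)" using c f[of x] by auto
    also have "\<dots> \<le> norm R * norm x" by (rule norm_blinfun)
    finally show "norm (f x) \<le> norm x * (norm R / c)"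
      using c by (simp add: field_simps)
  qed
  then show ?thesis using f by (intro exI[of _ "Blinfun f"]) (simp add: bounded_linear_Blinfun_apply)
qed

lemma proper_ideal_sub_SX:
  assumes ch: "complementably_homogeneous TYPE('a::banach)"
    and J: "two_sided_ideal (J :: ('a \<Rightarrow>\<^sub>L 'a) set)" "J \<noteq> UNIV"
  shows "J \<subseteq> SX"
proof
  fix T assume TJ: "T \<in> J"
  show "T \<in> SX"
  proof (rule ccontr)
    assume "T \<notin> SX"
    then obtain W where W: "closed_subspace W" "iso_to_space W" "bounded_below_on T W"
      unfolding SX_def by auto
    have iso: "iso_to_space (blinfun_apply T ` W)" using iso_image W by blast
    then have "closed_subspace (blinfun_apply T ` W)" by (rule iso_closed)
    then obtain Z where Z: "Z \<subseteq> blinfun_apply T ` W" "complemented Z" "iso_to_space Z"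
      using ch iso unfolding complementably_homogeneous_def by blast
    obtain P :: "'a \<Rightarrow>\<^sub>L 'a" where P: "P o\<^sub>L P = P" "range (blinfun_apply P) = Z"
      using Z(2) unfolding complemented_def by auto
    obtain S :: "'a \<Rightarrow>\<^sub>L 'a" where S: "range (blinfun_apply S) = Z" "bounded_below_on S UNIV"
      using Z(3) unfolding iso_to_space_def by blast
    obtain B :: "'a \<Rightarrow>\<^sub>L 'a" where B: "\<forall>x. B x \<in> W \<and> T (B x) = S x"
      using inv_blinfun[of W T S] W(1,3) S(1) Z(1) unfolding closed_subspace_def by auto
    obtain A :: "'a \<Rightarrow>\<^sub>L 'a" where A: "\<forall>x. S (A x) = P x"
      using inv_blinfun[of UNIV S P] S P(1,2) by auto
    obtain d where d: "d > 0" "\<forall>x. d * norm x \<le> norm (S x)"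
      using S(2) unfolding bounded_below_on_def by auto
    have Sinj: "u = v" if "S u = S v" for u v
    proof -
      have "d * norm (u - v) \<le> norm (S (u - v))" using d by auto
      also have "S (u - v) = 0" using that by (simp add: blinfun.diff_right)
      finally have "d * norm (u - v) \<le> 0" by simp
      then have "norm (u - v) \<le> 0" using d by (simp add: mult_le_0_iff)
      then show ?thesis by simp
    qed
    have idI: "(A o\<^sub>L T) o\<^sub>L B = id_blinfun"
    proof (rule blinfun_eqI)
      fix x
      have "S x \<in> range (blinfun_apply P)" using S(1) P(2) by auto
      then obtain y where y: "S x = P y" by auto
      have "P (S x) = S x" using y P(1)
        by (metis blinfun_apply_blinfun_compose)
      then have "S (A (S x)) = S x" using A by simp
      then have "A (S x) = x" by (rule Sinj)
      then show "((A o\<^sub>L T) o\<^sub>L B) x = id_blinfun x" using B by simp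
    qed
    have "A o\<^sub>L T \<in> J" using J(1) TJ unfolding two_sided_ideal_def by blast
    then have "id_blinfun \<in> J" using J(1) idI unfolding two_sided_ideal_def by metis
    then have "b o\<^sub>L id_blinfun \<in> J" for b using J(1) unfolding two_sided_ideal_def by blast
    moreover have "b o\<^sub>L id_blinfun = b" for b :: "'a \<Rightarrow>\<^sub>L 'a" by (rule blinfun_eqI) simp
    ultimately have "J = UNIV" by (metis UNIV_eq_I)
    then show False using J(2) by simp
  qed
qed

lemma div_helper:
  fixes c k n m :: real
  assumes "0 < c" "0 < k" "c * n \<le> k * m"
  shows "c / k * n \<le> m"
proof -
  have "c / k * n = (c * n) / k" by simp
  also have "\<dots> \<le> m" using assms by (simp add: pos_divide_le_eq mult.commute)
  finally show ?thesis .
qed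

lemma zero_SX:
assumes inf: "infinite_dimensional TYPE('a::banach)"
shows "(0::'a \<Rightarrow>\<^sub>L 'a) \<in> SX"
  unfolding SX_def
proof (clarify)
  fix W :: "'a set" assume W: "closed_subspace W" "iso_to_space W" "bounded_below_on (0::'a \<Rightarrow>\<^sub>L 'a) W"
  have "\<exists>w\<in>W. w \<noteq> 0" by (rule iso_nonzero[OF inf W(2)])
  then obtain w where w: "w \<in> W" "w \<noteq> 0" by (rule bexE)
  have "\<exists>c>0. \<forall>x\<in>W. c * norm x \<le> norm ((0::'a \<Rightarrow>\<^sub>L 'a) x)"
    using W(3) unfolding bounded_below_on_def .
  then obtain c where c: "c > 0" "\<forall>x\<in>W. c * norm x \<le> norm ((0::'a \<Rightarrow>\<^sub>L 'a) x)"
    by (elim exE conjE)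
  have "c * norm w \<le> norm ((0::'a \<Rightarrow>\<^sub>L 'a) w)" using c(2) w(1) by (rule bspec)
  then have "c * norm w \<le> 0" by simp
  then have "norm w \<le> 0" using c(1) by (simp add: mult_le_0_iff)
  then show False using w(2) by simp
qed

lemma SX_ideal:
  assumes ch: "complementably_homogeneous TYPE('a::banach)"
    and add: "\<forall>S\<in>(SX :: ('a \<Rightarrow>\<^sub>L 'a) set). \<forall>T\<in>SX. S + T \<in> SX"
  shows "two_sided_ideal (SX :: ('a \<Rightarrow>\<^sub>L 'a) set)"
proof -
  have inf: "infinite_dimensional TYPE('a)" using ch unfolding complementably_homogeneous_def by auto
  have zero: "(0::'a \<Rightarrow>\<^sub>L 'a) \<in> SX" by (rule zero_SX[OF inf])
  have neg: "- a \<in> SX" if "a \<in> SX" for a :: "'a \<Rightarrow>\<^sub>L 'a"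
    using that unfolding SX_def bounded_below_on_def by (simp add: blinfun.minus_left)
  have left: "b o\<^sub>L a \<in> SX" if "a \<in> SX" for a b :: "'a \<Rightarrow>\<^sub>L 'a"
  proof -
    have bbW: "bounded_below_on a W" if bc: "bounded_below_on (b o\<^sub>L a) W" for W
    proof -
      obtain c where c: "c > 0" "\<forall>x\<in>W. c * norm x \<le> norm (b (a x))"
        using bc unfolding bounded_below_on_def blinfun_apply_blinfun_compose by blast
      show ?thesis unfolding bounded_below_on_def
      proof (intro exI[of _ "c / (norm b + 1)"] conjI ballI)
        have nb: "0 < norm b + 1" by (simp add: add_nonneg_pos)
        show "0 < c / (norm b + 1)" using c nb by simp
        fix x assume "x \<in> W"
        then have "c * norm x \<le> norm (b (a x))" using c by auto
        also have "\<dots> \<le> norm b * norm (a x)" by (rule norm_blinfun)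
        also have "\<dots> \<le> (norm b + 1) * norm (a x)" by (simp add: mult_right_mono)
        finally show "c / (norm b + 1) * norm x \<le> norm (a x)"
          by (rule div_helper[OF c(1) nb])
      qed
    qed
    show ?thesis unfolding SX_def mem_Collect_eq
    proof clarify
      fix W :: "'a set"
      assume W: "closed_subspace W" "iso_to_space W" "bounded_below_on (b o\<^sub>L a) W"
      have "bounded_below_on a W" using bbW[OF W(3)] .
      with W(1,2) \<open>a \<in> SX\<close> show False unfolding SX_def by auto
    qed
  qed
  have right: "a o\<^sub>L b \<in> SX" if aS: "a \<in> SX" for a b :: "'a \<Rightarrow>\<^sub>L 'a"
    unfolding SX_def mem_Collect_eq
  proof (clarify)
    fix W :: "'a set" assume W: "closed_subspace W" "iso_to_space W" "bounded_below_on (a o\<^sub>L b) W"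
    obtain c where c: "c > 0" "\<forall>x\<in>W. c * norm x \<le> norm (a (b x))"
      using W(3) unfolding bounded_below_on_def blinfun_apply_blinfun_compose by blast
    have na: "0 < norm a + 1" "0 < norm b + 1" by (simp_all add: add_nonneg_pos)
    have bW: "bounded_below_on b W" unfolding bounded_below_on_def
    proof (intro exI[of _ "c / (norm a + 1)"] conjI ballI)
      show "0 < c / (norm a + 1)" using c na by simp
      fix x assume "x \<in> W"
      then have "c * norm x \<le> norm (a (b x))" using c by auto
      also have "\<dots> \<le> norm a * norm (b x)" by (rule norm_blinfun)
      also have "\<dots> \<le> (norm a + 1) * norm (b x)" by (simp add: mult_right_mono)
      finally show "c / (norm a + 1) * norm x \<le> norm (b x)"
        by (rule div_helper[OF c(1) na(1)])
    qed
    have iso: "iso_to_space (blinfun_apply b ` W)" using iso_image W(2) bW by blast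
    have cl: "closed_subspace (blinfun_apply b ` W)" using iso by (rule iso_closed)
    have bA: "bounded_below_on a (blinfun_apply b ` W)" unfolding bounded_below_on_def
    proof (intro exI[of _ "c / (norm b + 1)"] conjI ballI)
      show "0 < c / (norm b + 1)" using c na by simp
      fix y assume "y \<in> blinfun_apply b ` W"
      then obtain x where x: "x \<in> W" "y = b x" by auto
      have "norm y \<le> norm b * norm x" using x by (simp add: norm_blinfun)
      also have "\<dots> \<le> (norm b + 1) * norm x" by (simp add: mult_right_mono)
      finally have "c * norm y \<le> c * ((norm b + 1) * norm x)" using c by simp
      also have "\<dots> = (norm b + 1) * (c * norm x)" by simp
      also have "\<dots> \<le> (norm b + 1) * norm (a y)"
        using na(2) c(2) x by (intro mult_left_mono) auto
      finally show "c / (norm b + 1) * norm y \<le> norm (a y)"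
        by (rule div_helper[OF c(1) na(2)])
    qed
    have "\<not> (closed_subspace (blinfun_apply b ` W) \<and> iso_to_space (blinfun_apply b ` W) \<and>
              bounded_below_on a (blinfun_apply b ` W))"
      using aS unfolding SX_def by blast
    then show False using iso cl bA by blast
  qed
  show ?thesis unfolding two_sided_ideal_def
    using zero neg left right add by (intro conjI ballI allI) auto
qed

theorem mainTheorem4:
  assumes "complementably_homogeneous TYPE('a::banach)"
  shows "(maximal_ideal (SX :: ('a \<Rightarrow>\<^sub>L 'a) set) \<and>
           (\<forall>J::('a \<Rightarrow>\<^sub>L 'a) set. maximal_ideal J \<longrightarrow> J = SX))
         \<longleftrightarrow> (\<forall>S\<in>(SX :: ('a \<Rightarrow>\<^sub>L 'a) set). \<forall>T\<in>SX. S + T \<in> SX)"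
proof
  assume "maximal_ideal (SX :: ('a \<Rightarrow>\<^sub>L 'a) set) \<and>
           (\<forall>J::('a \<Rightarrow>\<^sub>L 'a) set. maximal_ideal J \<longrightarrow> J = SX)"
  then have "two_sided_ideal (SX :: ('a \<Rightarrow>\<^sub>L 'a) set)" unfolding maximal_ideal_def by simp
  then show "\<forall>S\<in>(SX :: ('a \<Rightarrow>\<^sub>L 'a) set). \<forall>T\<in>SX. S + T \<in> SX"
    unfolding two_sided_ideal_def by simp
next
  assume add: "\<forall>S\<in>(SX :: ('a \<Rightarrow>\<^sub>L 'a) set). \<forall>T\<in>SX. S + T \<in> SX"
  have I: "two_sided_ideal (SX :: ('a \<Rightarrow>\<^sub>L 'a) set)" using SX_ideal[OF assms add] .
  have "id_blinfun \<notin> (SX :: ('a \<Rightarrow>\<^sub>L 'a) set)"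
  proof -
    have C: "closed_subspace (UNIV::'a set)" by (simp add: closed_subspace_def subspace_UNIV)
    have bb: "bounded_below_on (id_blinfun::'a \<Rightarrow>\<^sub>L 'a) UNIV"
      unfolding bounded_below_on_def by (intro exI[of _ 1]) auto
    have "iso_to_space (UNIV::'a set)"
      unfolding iso_to_space_def using bb by (intro exI[of _ id_blinfun]) auto
    then show ?thesis using C bb unfolding SX_def by auto
  qed
  then have P: "(SX :: ('a \<Rightarrow>\<^sub>L 'a) set) \<noteq> UNIV" by auto
  have sub: "\<And>J. two_sided_ideal J \<Longrightarrow> J \<noteq> UNIV \<Longrightarrow> J \<subseteq> (SX :: ('a \<Rightarrow>\<^sub>L 'a) set)"
    by (rule proper_ideal_sub_SX[OF assms])
  have M: "maximal_ideal (SX :: ('a \<Rightarrow>\<^sub>L 'a) set)"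
    unfolding maximal_ideal_def
  proof (intro conjI allI impI)
    fix J :: "('a \<Rightarrow>\<^sub>L 'a) set"
    assume "two_sided_ideal J \<and> J \<noteq> UNIV \<and> SX \<subseteq> J"
    then show "J = SX" using sub by (meson subset_antisym)
  qed (use I P in auto)
  moreover have "\<forall>J::('a \<Rightarrow>\<^sub>L 'a) set. maximal_ideal J \<longrightarrow> J = SX"
  proof (intro allI impI)
    fix J :: "('a \<Rightarrow>\<^sub>L 'a) set"
    assume J: "maximal_ideal J"
    then have "J \<subseteq> SX" using sub unfolding maximal_ideal_def by simp
    then show "J = SX" using J I P unfolding maximal_ideal_def by (metis)
  qed
  ultimately show "maximal_ideal (SX :: ('a \<Rightarrow>\<^sub>L 'a) set) \<and>
           (\<forall>J::('a \<Rightarrow>\<^sub>L 'a) set. maximal_ideal J \<longrightarrow> J = SX)" by (rule conjI)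
qed

end
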